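(* Let $R$ be a QNA and, for $k\in[0,N]$, let $Q_k$ be the subgroup of $Q=X(\mathcal H)$ generated by $\underline{\beta_1},\ldots,\underline{\beta_k}$, where $\underline{\beta_i}=\operatorname{wt}(x_i)$. For $k\in[1,N]$: (a) if $\delta_k\neq0$ then $Q_k=Q_{k-1}$; (b) if $\delta_k=0$ then $Q_k=Q_{k-1}\oplus\mathbb Z\underline{\beta_k}$.
   Context: ${\mathbb K}$ is a field of characteristic $0$. A quantum nilpotent algebra (QNA) is an iterated Ore extension $R={\mathbb K}[x_1][x_2;\sigma_2,\delta_2]\cdots[x_N;\sigma_N,\delta_N]$, where $R_k={\mathbb K}[x_1][x_2;\sigma_2,\delta_2]\cdots[x_k;\sigma_k,\delta_k]$ ($R_0={\mathbb K}$), $\sigma_k$ is a ${\mathbb K}$-automorphism and $\delta_k$ a $\sigma_k$-derivation of $R_{k-1}$, together with a torus $\mathcal H$ acting rationally by ${\mathbb K}$-automorphisms on $R$ with each $x_i$ an $\mathcal H$-eigenvector, such that: (i) $\sigma_k(x_j)=\lambda_{kj}x_j$ for $j<k$, with $\lambda_{kj}\in{\mathbb K}^*$; (ii) $\delta_k$ is locally nilpotent on $R_{k-1}$; (iii) for each $k$ there exist $h_k\in\mathcal H$ and $q_k\in{\mathbb K}^*$ not a root of unity such that $h_k$ acts on $R_{k-1}$ as $\sigma_k$ and $h_k\cdot x_k=q_kx_k$. The rank is $n=|\{k:\delta_k=0\}|$, and $\mathcal H=({\mathbb K}^* )^n$ is taken to be this maximal torus. Its character group $Q=X(\mathcal H)\cong\mathbb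 Z^n$ grades $R$; homogeneous elements are the $\mathcal H$-eigenvectors, and for homogeneous $a$, $\operatorname{wt}(a)=(\alpha_1,\ldots,\alpha_n)\in\mathbb Z^n$ is defined by $(h_1,\ldots,h_n)\cdot a=h_1^{\alpha_1}\cdots h_n^{\alpha_n}a$. *)

theory Defs
  imports Main
begin

definition Kalg :: "('k::field \<Rightarrow> 'r::ring_1) \<Rightarrow> bool" where
  "Kalg \<iota> \<longleftrightarrow> \<iota> 0 = 0 \<and> \<iota> 1 = 1 \<and> (\<forall>a b. \<iota> (a + b) = \<iota> a + \<iota> b)
     \<and> (\<forall>a b. \<iota> (a * b) = \<iota> a * \<iota> b) \<and> (\<forall>c r. \<iota> c * r = r * \<iota> c) \<and> inj \<iota>"

fun mono :: "(nat \<Rightarrow> 'r::ring_1) \<Rightarrow> nat \<Rightarrow> (nat \<Rightarrow> nat) \<Rightarrow> 'r" where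
  "mono x 0 e = 1"
| "mono x (Suc k) e = mono x k e * x (Suc k) ^ e (Suc k)"

definition expv :: "nat \<Rightarrow> (nat \<Rightarrow> nat) set" where
  "expv k = {e. \<forall>i. (i = 0 \<or> k < i) \<longrightarrow> e i = 0}"

definition Rsub :: "('k::field \<Rightarrow> 'r::ring_1) \<Rightarrow> (nat \<Rightarrow> 'r) \<Rightarrow> nat \<Rightarrow> 'r set" where
  "Rsub \<iota> x k = {r. \<exists>S c. finite S \<and> S \<subseteq> expv k \<and> r = (\<Sum>e\<in>S. \<iota> (c e) * mono x k e)}"

definition PBW_basis :: "('k::field \<Rightarrow> 'r::ring_1) \<Rightarrow> (nat \<Rightarrow> 'r) \<Rightarrow> nat \<Rightarrow> bool" where
  "PBW_basis \<iota> x N \<longleftrightarrow> Rsub \<iota> x N = UNIV \<and>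
     (\<forall>S c. finite S \<and> S \<subseteq> expv N \<and> (\<Sum>e\<in>S. \<iota> (c e) * mono x N e) = 0 \<longrightarrow> (\<forall>e\<in>S. c e = 0))"

definition is_Kaut_on :: "('k::field \<Rightarrow> 'r::ring_1) \<Rightarrow> 'r set \<Rightarrow> ('r \<Rightarrow> 'r) \<Rightarrow> bool" where
  "is_Kaut_on \<iota> A f \<longleftrightarrow> bij_betw f A A \<and>
     (\<forall>a\<in>A. \<forall>b\<in>A. f (a + b) = f a + f b \<and> f (a * b) = f a * f b) \<and> (\<forall>c. f (\<iota> c) = \<iota> c)"

definition is_sigma_der :: "('k::field \<Rightarrow> 'r::ring_1) \<Rightarrow> 'r set \<Rightarrow> ('r \<Rightarrow> 'r) \<Rightarrow> ('r \<Rightarrow> 'r) \<Rightarrow> bool" where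
  "is_sigma_der \<iota> A s d \<longleftrightarrow> (\<forall>a\<in>A. d a \<in> A) \<and>
     (\<forall>a\<in>A. \<forall>b\<in>A. d (a + b) = d a + d b \<and> d (a * b) = s a * d b + d a * b) \<and>
     (\<forall>c. \<forall>a\<in>A. d (\<iota> c * a) = \<iota> c * d a)"

text \<open>The torus (K^*)^n, elements encoded as functions nat => K equal to 1 outside [0,n).\<close>
definition torus :: "nat \<Rightarrow> (nat \<Rightarrow> 'k::field) set" where
  "torus n = {h. (\<forall>i<n. h i \<noteq> 0) \<and> (\<forall>i\<ge>n. h i = 1)}"

text \<open>Character lattice Q = X(H) = Z^n, encoded as functions nat => int vanishing outside [0,n).\<close>
definition lattice :: "nat \<Rightarrow> (nat \<Rightarrow> int) set" where
  "lattice n = {\<alpha>. \<forall>i\<ge>n. \<alpha> i = 0}"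

definition chi :: "nat \<Rightarrow> (nat \<Rightarrow> int) \<Rightarrow> (nat \<Rightarrow> 'k::field) \<Rightarrow> 'k" where
  "chi n \<alpha> h = (\<Prod>i<n. h i powi \<alpha> i)"

definition has_weight :: "('k::field \<Rightarrow> 'r::ring_1) \<Rightarrow> nat \<Rightarrow> ((nat \<Rightarrow> 'k) \<Rightarrow> 'r \<Rightarrow> 'r) \<Rightarrow> 'r \<Rightarrow> (nat \<Rightarrow> int) \<Rightarrow> bool" where
  "has_weight \<iota> n act a \<alpha> \<longleftrightarrow> \<alpha> \<in> lattice n \<and> (\<forall>h\<in>torus n. act h a = \<iota> (chi n \<alpha> h) * a)"

definition wt :: "('k::field \<Rightarrow> 'r::ring_1) \<Rightarrow> nat \<Rightarrow> ((nat \<Rightarrow> 'k) \<Rightarrow> 'r \<Rightarrow> 'r) \<Rightarrow> 'r \<Rightarrow> nat \<Rightarrow> int" where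
  "wt \<iota> n act a = (THE \<alpha>. has_weight \<iota> n act a \<alpha>)"

text \<open>Rational action of (K^*)^n by K-algebra automorphisms: a group action by automorphisms
  for which R is the sum of its weight spaces for (rational) characters.\<close>
definition rational_torus_action :: "('k::field \<Rightarrow> 'r::ring_1) \<Rightarrow> nat \<Rightarrow> ((nat \<Rightarrow> 'k) \<Rightarrow> 'r \<Rightarrow> 'r) \<Rightarrow> bool" where
  "rational_torus_action \<iota> n act \<longleftrightarrow>
     (\<forall>h\<in>torus n. bij (act h) \<and> (\<forall>a b. act h (a + b) = act h a + act h b \<and> act h (a * b) = act h a * act h b)
        \<and> (\<forall>c. act h (\<iota> c) = \<iota> c))
   \<and> act (\<lambda>i. 1) = id
   \<and> (\<forall>h\<in>torus n. \<forall>g\<in>torus n. act (\<lambda>i. h i * g i) = act h \<circ> act g)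
   \<and> (\<forall>a. \<exists>S f. finite S \<and> S \<subseteq> lattice n \<and> (\<forall>\<alpha>\<in>S. has_weight \<iota> n act (f \<alpha>) \<alpha>) \<and> a = (\<Sum>\<alpha>\<in>S. f \<alpha>))"

definition is_eigvec :: "('k::field \<Rightarrow> 'r::ring_1) \<Rightarrow> nat \<Rightarrow> ((nat \<Rightarrow> 'k) \<Rightarrow> 'r \<Rightarrow> 'r) \<Rightarrow> 'r \<Rightarrow> bool" where
  "is_eigvec \<iota> n act a \<longleftrightarrow> a \<noteq> 0 \<and> (\<forall>h\<in>torus n. \<exists>c. act h a = \<iota> c * a)"

text \<open>Quantum nilpotent algebra R = K[x_1][x_2;s_2,d_2]...[x_N;s_N,d_N] (with R the whole type 'r),
  with the maximal torus H = (K^*)^n (n = rank) acting rationally and faithfully.\<close>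
definition QNA :: "('k::field \<Rightarrow> 'r::ring_1) \<Rightarrow> (nat \<Rightarrow> 'r) \<Rightarrow> nat \<Rightarrow> (nat \<Rightarrow> 'r \<Rightarrow> 'r) \<Rightarrow> (nat \<Rightarrow> 'r \<Rightarrow> 'r)
     \<Rightarrow> nat \<Rightarrow> ((nat \<Rightarrow> 'k) \<Rightarrow> 'r \<Rightarrow> 'r) \<Rightarrow> bool" where
  "QNA \<iota> x N \<sigma> \<delta> n act \<longleftrightarrow>
     Kalg \<iota> \<and> PBW_basis \<iota> x N
   \<and> (\<forall>k\<in>{1..N}. is_Kaut_on \<iota> (Rsub \<iota> x (k - 1)) (\<sigma> k)
        \<and> is_sigma_der \<iota> (Rsub \<iota> x (k - 1)) (\<sigma> k) (\<delta> k)
        \<and> (\<forall>a\<in>Rsub \<iota> x (k - 1). x k * a = \<sigma> k a * x k + \<delta> k a))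
   \<and> (\<forall>k\<in>{1..N}. \<forall>j\<in>{1..<k}. \<exists>l. l \<noteq> 0 \<and> \<sigma> k (x j) = \<iota> l * x j)
   \<and> (\<forall>k\<in>{1..N}. \<forall>a\<in>Rsub \<iota> x (k - 1). \<exists>m. (\<delta> k ^^ m) a = 0)
   \<and> rational_torus_action \<iota> n act
   \<and> (\<forall>i\<in>{1..N}. is_eigvec \<iota> n act (x i))
   \<and> (\<forall>k\<in>{1..N}. \<exists>h\<in>torus n. (\<forall>a\<in>Rsub \<iota> x (k - 1). act h a = \<sigma> k a)
        \<and> (\<exists>q. q \<noteq> 0 \<and> (\<forall>m::nat. m > 0 \<longrightarrow> q ^ m \<noteq> 1) \<and> act h (x k) = \<iota> q * x k))
   \<and> n = card {k\<in>{1..N}. \<forall>a\<in>Rsub \<iota> x (k - 1). \<delta> k a = 0}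
   \<and> (\<forall>h\<in>torus n. act h = id \<longrightarrow> h = (\<lambda>i. 1))"

definition Qgen :: "('k::field \<Rightarrow> 'r::ring_1) \<Rightarrow> nat \<Rightarrow> ((nat \<Rightarrow> 'k) \<Rightarrow> 'r \<Rightarrow> 'r) \<Rightarrow> (nat \<Rightarrow> 'r) \<Rightarrow> nat \<Rightarrow> (nat \<Rightarrow> int) set" where
  "Qgen \<iota> n act x k = {\<beta>. \<exists>c::nat \<Rightarrow> int. \<beta> = (\<lambda>t. \<Sum>i\<in>{1..k}. c i * wt \<iota> n act (x i) t)}"

end

theory Submission
  imports Defs
begin


lemma two_powi_eq_1:
  assumes "(2::'k::field_char_0) powi a = 1" shows "a = 0"
proof -
  have nn: "(2::'k) powi b = 1 \<Longrightarrow> b \<ge> 0 \<Longrightarrow> b = 0" for b :: int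
  proof -
    assume h: "(2::'k) powi b = 1" "b \<ge> 0"
    then have "(2::'k) ^ nat b = 1" by (simp add: power_int_nonneg_exp)
    then have "(of_nat (2 ^ nat b) :: 'k) = 1" by simp
    then have "(2::nat) ^ nat b = 1" using of_nat_eq_1_iff by blast
    then show "b = 0" using h(2) by simp
  qed
  show ?thesis
  proof (cases "a \<ge> 0")
    case True then show ?thesis using nn assms by blast
  next
    case False
    have "(2::'k) powi (-a) = inverse (2 powi a)" by (simp add: power_int_minus)
    then have "(2::'k) powi (-a) = 1" using assms by simp
    then have "-a = 0" using nn[of "-a"] False by simp
    then show ?thesis by simp
  qed
qed

lemma two_powi_inj:
  assumes "(2::'k::field_char_0) powi a = 2 powi b" shows "a = b"
proof -
  have "(2::'k) powi (a - b) = 1" using assms by (simp add: power_int_diff)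
  then show ?thesis using two_powi_eq_1 by fastforce
qed

lemma chi_single:
  assumes "j < n"
  shows "chi n \<alpha> (\<lambda>i. if i = j then (c::'k::field) else 1) = c powi \<alpha> j"
proof -
  have "chi n \<alpha> (\<lambda>i. if i = j then c else 1) = (\<Prod>i<n. if i = j then c powi \<alpha> j else 1)"
    unfolding chi_def by (rule prod.cong) auto
  also have "\<dots> = c powi \<alpha> j" using assms by (simp add: prod.delta)
  finally show ?thesis .
qed


lemma separate:
  assumes "\<alpha> \<in> lattice n" "\<beta> \<in> lattice n" "\<alpha> \<noteq> \<beta>"
  shows "\<exists>h\<in>torus n. chi n \<alpha> h \<noteq> (chi n \<beta> h :: 'k::field_char_0)"
proof -
  obtain j where j: "\<alpha> j \<noteq> \<beta> j" using assms(3) by auto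
  have jn: "j < n" 
  proof (rule ccontr)
    assume "\<not> j < n"
    then have "\<alpha> j = 0" "\<beta> j = 0" using assms(1,2) unfolding lattice_def by auto
    with j show False by simp
  qed
  let ?h = "\<lambda>i. if i = j then (2::'k) else 1"
  have "?h \<in> torus n" unfolding torus_def using jn by simp
  moreover have "chi n \<alpha> ?h \<noteq> chi n \<beta> ?h"
  proof
    assume "chi n \<alpha> ?h = chi n \<beta> ?h"
    then have "(2::'k) powi \<alpha> j = 2 powi \<beta> j" by (simp only: chi_single[OF jn])
    then have "\<alpha> j = \<beta> j" by (rule two_powi_inj)
    with j show False by simp
  qed
  ultimately show ?thesis by blast
qed

lemma chi_add:
  assumes "h \<in> torus n"
  shows "chi n (\<lambda>t. \<alpha> t + \<beta> t) h = chi n \<alpha> h * chi n \<beta> h"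
proof -
  have "chi n (\<lambda>t. \<alpha> t + \<beta> t) h = (\<Prod>i<n. h i powi \<alpha> i * h i powi \<beta> i)"
    unfolding chi_def
    by (rule prod.cong) (use assms in \<open>auto simp: torus_def power_int_add\<close>)
  then show ?thesis unfolding chi_def by (simp add: prod.distrib)
qed

lemma chi_zero: "chi n (\<lambda>t. 0) h = 1"
  unfolding chi_def by simp



lemma Kalg_facts:
  assumes "Kalg \<iota>"
  shows "\<iota> (a - b) = \<iota> a - \<iota> b" "\<iota> (a * b) = \<iota> a * \<iota> b" "\<iota> (a + b) = \<iota> a + \<iota> b"
    "\<iota> 0 = 0" "\<iota> 1 = 1" "\<iota> c * r = r * \<iota> c"
proof -
  have add: "\<And>a b. \<iota> (a + b) = \<iota> a + \<iota> b" using assms unfolding Kalg_def by blast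
  have "\<iota> (a - b) + \<iota> b = \<iota> a" using add[of "a - b" b] by simp
  then show "\<iota> (a - b) = \<iota> a - \<iota> b" by (simp add: eq_diff_eq)
  show "\<iota> (a + b) = \<iota> a + \<iota> b" by (rule add)
  show "\<iota> (a * b) = \<iota> a * \<iota> b" using assms unfolding Kalg_def by blast
  show "\<iota> 0 = 0" using assms unfolding Kalg_def by blast
  show "\<iota> 1 = 1" using assms unfolding Kalg_def by blast
  show "\<iota> c * r = r * \<iota> c" using assms unfolding Kalg_def by blast
qed

lemma Kalg_cancel:
  assumes "Kalg \<iota>" "c \<noteq> 0" "\<iota> c * y = 0" shows "y = 0"
proof -
  have "\<iota> (inverse c) * (\<iota> c * y) = \<iota> (inverse c * c) * y"
    using Kalg_facts(2)[OF assms(1)] by (simp add: mult.assoc)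
  also have "\<dots> = y" using assms(2) Kalg_facts(5)[OF assms(1)] by simp
  finally show ?thesis using assms(3) by simp
qed



locale ctx =
  fixes \<iota> :: "'k::field_char_0 \<Rightarrow> 'r::ring_1" and n :: nat and act :: "(nat \<Rightarrow> 'k) \<Rightarrow> 'r \<Rightarrow> 'r"
  assumes K: "Kalg \<iota>" and RA: "rational_torus_action \<iota> n act"
begin

lemma act_add: "h \<in> torus n \<Longrightarrow> act h (a + b) = act h a + act h b"
  using RA unfolding rational_torus_action_def by blast
lemma act_mult: "h \<in> torus n \<Longrightarrow> act h (a * b) = act h a * act h b"
  using RA unfolding rational_torus_action_def by blast
lemma act_K: "h \<in> torus n \<Longrightarrow> act h (\<iota> c) = \<iota> c"
  using RA unfolding rational_torus_action_def by blast
lemma act_0: "h \<in> torus n \<Longrightarrow> act h 0 = 0"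
  using act_add[of h 0 0] by simp
lemma act_1: "h \<in> torus n \<Longrightarrow> act h 1 = 1"
  using act_K[of h 1] Kalg_facts(5)[OF K] by simp
lemma act_diff: "h \<in> torus n \<Longrightarrow> act h (a - b) = act h a - act h b"
  using act_add[of h "a - b" b] by (simp add: eq_diff_eq)
lemma act_scale: "h \<in> torus n \<Longrightarrow> act h (\<iota> c * a) = \<iota> c * act h a"
  using act_mult act_K by simp
lemma act_sum: "h \<in> torus n \<Longrightarrow> act h (sum f S) = (\<Sum>i\<in>S. act h (f i))"
  by (induction S rule: infinite_finite_induct) (auto simp: act_0 act_add)

lemma central: "\<iota> c * r = r * \<iota> c" by (rule Kalg_facts(6)[OF K])

lemma hw_lattice: "has_weight \<iota> n act a \<alpha> \<Longrightarrow> \<alpha> \<in> lattice n"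
  unfolding has_weight_def by blast

lemma hw_act: "has_weight \<iota> n act a \<alpha> \<Longrightarrow> h \<in> torus n \<Longrightarrow> act h a = \<iota> (chi n \<alpha> h) * a"
  unfolding has_weight_def by blast

lemma hwI: "\<alpha> \<in> lattice n \<Longrightarrow> (\<And>h::nat\<Rightarrow>'k. h \<in> torus n \<Longrightarrow> act h a = \<iota> (chi n \<alpha> h) * a) \<Longrightarrow> has_weight \<iota> n act a \<alpha>"
  unfolding has_weight_def by blast

lemma hw_scale:
  assumes "has_weight \<iota> n act a \<alpha>" shows "has_weight \<iota> n act (\<iota> c * a) \<alpha>"
proof (rule hwI)
  show "\<alpha> \<in> lattice n" using hw_lattice[OF assms] .
  fix h :: "nat \<Rightarrow> 'k" assume h: "h \<in> torus n"
  have "act h (\<iota> c * a) = \<iota> c * (\<iota> (chi n \<alpha> h) * a)" using act_scale[OF h] hw_act[OF assms h] by simp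
  also have "\<dots> = \<iota> (chi n \<alpha> h) * (\<iota> c * a)"
    by (simp add: mult.assoc[symmetric] Kalg_facts(2)[OF K, symmetric] mult.commute)
  finally show "act h (\<iota> c * a) = \<iota> (chi n \<alpha> h) * (\<iota> c * a)" .
qed

lemma hw_add:
  assumes "has_weight \<iota> n act a \<alpha>" "has_weight \<iota> n act b \<alpha>" shows "has_weight \<iota> n act (a + b) \<alpha>"
  using assms unfolding has_weight_def by (auto simp: act_add distrib_left)

lemma hw_diff:
  assumes "has_weight \<iota> n act a \<alpha>" "has_weight \<iota> n act b \<alpha>" shows "has_weight \<iota> n act (a - b) \<alpha>"
  using assms unfolding has_weight_def by (auto simp: act_diff right_diff_distrib)

lemma hw_zero: "\<alpha> \<in> lattice n \<Longrightarrow> has_weight \<iota> n act 0 \<alpha>"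
  unfolding has_weight_def by (auto simp: act_0)

lemma hw_sum:
  assumes "\<alpha> \<in> lattice n" "\<And>i. i \<in> S \<Longrightarrow> has_weight \<iota> n act (f i) \<alpha>"
  shows "has_weight \<iota> n act (sum f S) \<alpha>"
  using assms(2)
  by (induction S rule: infinite_finite_induct) (auto simp: hw_zero[OF assms(1)] hw_add)

lemma lattice_add: "\<alpha> \<in> lattice n \<Longrightarrow> \<beta> \<in> lattice n \<Longrightarrow> (\<lambda>t. \<alpha> t + \<beta> t) \<in> lattice n"
  unfolding lattice_def by auto

lemma hw_mult:
  assumes "has_weight \<iota> n act a \<alpha>" "has_weight \<iota> n act b \<beta>"
  shows "has_weight \<iota> n act (a * b) (\<lambda>t. \<alpha> t + \<beta> t)"
proof (rule hwI)
  show "(\<lambda>t. \<alpha> t + \<beta> t) \<in> lattice n" using hw_lattice assms lattice_add by blast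
  fix h :: "nat \<Rightarrow> 'k" assume h: "h \<in> torus n"
  have "act h (a * b) = \<iota> (chi n \<alpha> h) * a * (\<iota> (chi n \<beta> h) * b)"
    using act_mult[OF h] hw_act[OF assms(1) h] hw_act[OF assms(2) h] by simp
  also have "\<dots> = \<iota> (chi n \<alpha> h) * (a * \<iota> (chi n \<beta> h)) * b" by (simp add: mult.assoc)
  also have "\<dots> = \<iota> (chi n \<alpha> h) * (\<iota> (chi n \<beta> h) * a) * b" by (simp add: central)
  also have "\<dots> = \<iota> (chi n \<alpha> h * chi n \<beta> h) * (a * b)" by (simp add: Kalg_facts(2)[OF K] mult.assoc)
  finally show "act h (a * b) = \<iota> (chi n (\<lambda>t. \<alpha> t + \<beta> t) h) * (a * b)" by (simp add: chi_add[OF h])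
qed

lemma hw_one: "has_weight \<iota> n act 1 (\<lambda>t. 0)"
  by (rule hwI) (auto simp: lattice_def chi_zero act_1 Kalg_facts(5)[OF K])

lemma hw_power:
  assumes "has_weight \<iota> n act a \<alpha>" shows "has_weight \<iota> n act (a ^ m) (\<lambda>t. int m * \<alpha> t)"
proof (induction m)
  case 0 then show ?case using hw_one by simp
next
  case (Suc m)
  have "has_weight \<iota> n act (a ^ m * a) (\<lambda>t. int m * \<alpha> t + \<alpha> t)" by (rule hw_mult[OF Suc assms])
  moreover have "a ^ Suc m = a ^ m * a" by (rule power_Suc2)
  moreover have "(\<lambda>t. int (Suc m) * \<alpha> t) = (\<lambda>t. int m * \<alpha> t + \<alpha> t)" by (simp add: algebra_simps)
  ultimately show ?case by simp
qed

lemma indep: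
  assumes "finite S" "S \<subseteq> lattice n" "\<forall>\<alpha>\<in>S. has_weight \<iota> n act (f \<alpha>) \<alpha>" "sum f S = 0"
  shows "\<forall>\<alpha>\<in>S. f \<alpha> = 0"
  using assms
proof (induction S arbitrary: f rule: finite_induct)
  case empty then show ?case by simp
next
  case (insert \<alpha>0 S f)
  have s0: "f \<alpha>0 + sum f S = 0" using insert by simp
  have S0: "\<forall>\<alpha>\<in>S. f \<alpha> = 0"
  proof
    fix \<alpha> assume aS: "\<alpha> \<in> S"
    have ne: "\<alpha> \<noteq> \<alpha>0" using aS insert(2) by blast
    have l1: "\<alpha> \<in> lattice n" "\<alpha>0 \<in> lattice n" using aS insert.prems(1) by auto
    obtain h where h: "h \<in> torus n" and hne: "chi n \<alpha> h \<noteq> (chi n \<alpha>0 h :: 'k)"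
      using separate[OF l1 ne] by blast
    let ?g = "\<lambda>\<beta>. \<iota> (chi n \<beta> h - chi n \<alpha>0 h) * f \<beta>"
    have "act h (f \<alpha>0 + sum f S) = 0" using s0 act_0[OF h] by simp
    moreover have "(\<Sum>i\<in>S. act h (f i)) = (\<Sum>\<beta>\<in>S. \<iota> (chi n \<beta> h) * f \<beta>)"
      using insert.prems(2) hw_act[OF _ h] by (intro sum.cong) auto
    moreover have "act h (f \<alpha>0) = \<iota> (chi n \<alpha>0 h) * f \<alpha>0"
      using insert.prems(2) hw_act[OF _ h] by auto
    ultimately have e1: "\<iota> (chi n \<alpha>0 h) * f \<alpha>0 + (\<Sum>\<beta>\<in>S. \<iota> (chi n \<beta> h) * f \<beta>) = 0"
      by (simp add: act_add[OF h] act_sum[OF h])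
    have e2: "\<iota> (chi n \<alpha>0 h) * f \<alpha>0 + (\<Sum>\<beta>\<in>S. \<iota> (chi n \<alpha>0 h) * f \<beta>) = 0"
      using arg_cong[OF s0, of "\<lambda>z. \<iota> (chi n \<alpha>0 h) * z"] by (simp add: distrib_left sum_distrib_left)
    have "sum ?g S = (\<Sum>\<beta>\<in>S. \<iota> (chi n \<beta> h) * f \<beta>) - (\<Sum>\<beta>\<in>S. \<iota> (chi n \<alpha>0 h) * f \<beta>)"
      by (simp add: Kalg_facts(1)[OF K] left_diff_distrib sum_subtractf)
    also have "\<dots> = 0" using e1 e2 by (metis add_left_cancel diff_self)
    finally have gs: "sum ?g S = 0" .
    have "\<forall>\<beta>\<in>S. has_weight \<iota> n act (?g \<beta>) \<beta>" using insert.prems(2) hw_scale by blast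
    then have "\<forall>\<beta>\<in>S. ?g \<beta> = 0" using insert.IH[of ?g] insert.prems(1) gs by blast
    then have "?g \<alpha> = 0" using aS by blast
    moreover have "chi n \<alpha> h - chi n \<alpha>0 h \<noteq> 0" using hne by simp
    ultimately show "f \<alpha> = 0" using Kalg_cancel[OF K] by blast
  qed
  then have "sum f S = 0" by simp
  then have "f \<alpha>0 = 0" using s0 by simp
  then show ?case using S0 by simp
qed

lemma hw_unique:
  assumes "has_weight \<iota> n act a \<alpha>" "has_weight \<iota> n act a \<beta>" "a \<noteq> 0"
  shows "\<alpha> = \<beta>"
proof (rule ccontr)
  assume "\<alpha> \<noteq> \<beta>"
  then obtain h where h: "h \<in> torus n" and hne: "chi n \<alpha> h \<noteq> (chi n \<beta> h :: 'k)"
    using separate[of \<alpha> n \<beta>] hw_lattice assms by blast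
  have "\<iota> (chi n \<alpha> h) * a = \<iota> (chi n \<beta> h) * a" using hw_act[OF assms(1) h] hw_act[OF assms(2) h] by simp
  then have "\<iota> (chi n \<alpha> h - chi n \<beta> h) * a = 0" by (simp add: Kalg_facts(1)[OF K] left_diff_distrib)
  moreover have "chi n \<alpha> h - chi n \<beta> h \<noteq> 0" using hne by simp
  ultimately show False using Kalg_cancel[OF K] assms(3) by blast
qed

lemma eig_weight:
  assumes "is_eigvec \<iota> n act a"
  shows "has_weight \<iota> n act a (wt \<iota> n act a)"
proof -
  obtain S f where S: "finite S" "S \<subseteq> lattice n" "\<forall>\<alpha>\<in>S. has_weight \<iota> n act (f \<alpha>) \<alpha>" "a = sum f S"
    using RA unfolding rational_torus_action_def by meson
  have a0: "a \<noteq> 0" using assms unfolding is_eigvec_def by blast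
  obtain \<alpha>0 where a0S: "\<alpha>0 \<in> S" and fa0: "f \<alpha>0 \<noteq> 0"
    using a0 S(4) sum.neutral by metis
  have "has_weight \<iota> n act a \<alpha>0"
  proof (rule hwI)
    show "\<alpha>0 \<in> lattice n" using S(2) a0S by blast
    fix h :: "nat \<Rightarrow> 'k" assume h: "h \<in> torus n"
    obtain c where c: "act h a = \<iota> c * a" using assms h unfolding is_eigvec_def by blast
    let ?g = "\<lambda>\<beta>. \<iota> (chi n \<beta> h - c) * f \<beta>"
    have "sum ?g S = (\<Sum>\<beta>\<in>S. \<iota> (chi n \<beta> h) * f \<beta>) - (\<Sum>\<beta>\<in>S. \<iota> c * f \<beta>)"
      by (simp add: Kalg_facts(1)[OF K] left_diff_distrib sum_subtractf)
    also have "\<dots> = act h a - \<iota> c * a"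
    proof -
      have "(\<Sum>i\<in>S. act h (f i)) = (\<Sum>\<beta>\<in>S. \<iota> (chi n \<beta> h) * f \<beta>)"
        using S(3) hw_act[OF _ h] by (intro sum.cong) auto
      then show ?thesis by (simp add: S(4) act_sum[OF h] sum_distrib_left)
    qed
    also have "\<dots> = 0" using c by simp
    finally have gs: "sum ?g S = 0" .
    have "\<forall>\<beta>\<in>S. has_weight \<iota> n act (?g \<beta>) \<beta>" using S(3) hw_scale by blast
    then have "?g \<alpha>0 = 0" using indep[OF S(1) S(2) _ gs] a0S by blast
    then have "chi n \<alpha>0 h = c" using Kalg_cancel[OF K, of "chi n \<alpha>0 h - c"] fa0 by auto
    then show "act h a = \<iota> (chi n \<alpha>0 h) * a" using c by simp
  qed
  then show ?thesis unfolding wt_def using hw_unique a0 by (metis theI)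
qed

end


lemma gauss:
  fixes b :: "'i \<Rightarrow> nat \<Rightarrow> int"
  assumes "finite T" "card T < n"
  shows "\<exists>v::nat\<Rightarrow>int. (\<exists>j<n. v j \<noteq> 0) \<and> (\<forall>i\<in>T. (\<Sum>j<n. v j * b i j) = 0)"
  using assms
proof (induction n arbitrary: T b)
  case 0 then show ?case by simp
next
  case (Suc n)
  show ?case
  proof (cases "\<forall>i\<in>T. b i n = 0")
    case True
    let ?v = "\<lambda>j. if j = n then 1 else (0::int)"
    have "(\<Sum>j<Suc n. ?v j * b i j) = b i n" for i
      by (simp add: lessThan_Suc)
    then show ?thesis using True by (intro exI[of _ ?v]) auto
  next
    case False
    then obtain p where pT: "p \<in> T" and bp: "b p n \<noteq> 0" by blast
    let ?T = "T - {p}"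
    have "card T > 0" using pT Suc.prems(1) card_gt_0_iff by blast
    then have cT: "card ?T < n" using Suc.prems pT by (simp add: card_Diff_singleton)
    let ?b = "\<lambda>i j. b p n * b i j - b i n * b p j"
    obtain v' where v'1: "\<exists>j<n. v' j \<noteq> 0" and v'2: "\<forall>i\<in>?T. (\<Sum>j<n. v' j * ?b i j) = 0"
      using Suc.IH[of ?T ?b] cT Suc.prems(1) by blast
    define s where "s i = (\<Sum>j<n. v' j * b i j)" for i
    have key: "(\<Sum>j<n. v' j * ?b i j) = b p n * s i - b i n * s p" for i
      unfolding s_def by (simp add: sum_subtractf sum_distrib_left algebra_simps)
    define v where "v j = (if j = n then - s p else b p n * v' j)" for j
    have vs: "(\<Sum>j<Suc n. v j * b i j) = b p n * s i - s p * b i n" for i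
    proof -
      have "(\<Sum>j<n. v j * b i j) = (\<Sum>j<n. b p n * (v' j * b i j))"
        by (rule sum.cong) (auto simp: v_def)
      also have "\<dots> = b p n * s i" unfolding s_def by (simp add: sum_distrib_left)
      finally show ?thesis by (simp add: lessThan_Suc v_def)
    qed
    have "\<forall>i\<in>T. (\<Sum>j<Suc n. v j * b i j) = 0"
    proof
      fix i assume iT: "i \<in> T"
      show "(\<Sum>j<Suc n. v j * b i j) = 0"
      proof (cases "i = p")
        case True then show ?thesis using vs by (simp add: mult.commute)
      next
        case False
        then have "b p n * s i - b i n * s p = 0" using v'2 iT key by auto
        then show ?thesis using vs by (simp add: mult.commute)
      qed
    qed
    moreover have "\<exists>j<Suc n. v j \<noteq> 0"
      using v'1 bp by (auto simp: v_def)
    ultimately show ?thesis by blast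
  qed
qed

lemma sum_last: "(k::nat) \<ge> 1 \<Longrightarrow> (\<Sum>i\<in>{1..k}. g i) = (\<Sum>i\<in>{1..k-1}. g i) + (g k :: 'a::comm_monoid_add)"
  by (cases k) (auto simp: sum.cl_ivl_Suc)

lemma dot_lin:
  "(\<Sum>j<n. v j * (\<Sum>l\<in>A. d l * (\<beta> l j::int))) = (\<Sum>l\<in>A. d l * (\<Sum>j<n. v j * \<beta> l j))"
  by (simp add: sum_distrib_left sum.swap[of _ A] mult.left_commute)

lemma two_powi_sum:
  "finite A \<Longrightarrow> (\<Prod>j\<in>A. (2::'k::field_char_0) powi f j) = 2 powi (\<Sum>j\<in>A. f j)"
  by (induction A rule: finite_induct) (auto simp: power_int_add)



locale qna =
  fixes \<iota> :: "'k::field_char_0 \<Rightarrow> 'r::ring_1" and x :: "nat \<Rightarrow> 'r" and N :: nat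
    and \<sigma> \<delta> :: "nat \<Rightarrow> 'r \<Rightarrow> 'r" and n :: nat and act :: "(nat \<Rightarrow> 'k) \<Rightarrow> 'r \<Rightarrow> 'r"
  assumes Q: "QNA \<iota> x N \<sigma> \<delta> n act"

sublocale qna \<subseteq> ctx \<iota> n act
  using Q unfolding QNA_def by unfold_locales blast+

context qna
begin

abbreviation "\<beta> i \<equiv> wt \<iota> n act (x i)"

lemma x_weight: "i \<in> {1..N} \<Longrightarrow> has_weight \<iota> n act (x i) (\<beta> i)"
  using Q eig_weight unfolding QNA_def by blast

lemma mono_weight:
  "j \<le> N \<Longrightarrow> has_weight \<iota> n act (mono x j e) (\<lambda>t. \<Sum>i\<in>{1..j}. int (e i) * \<beta> i t)"
proof (induction j)
  case 0 then show ?case using hw_one by simp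
next
  case (Suc j)
  have "has_weight \<iota> n act (mono x j e * x (Suc j) ^ e (Suc j))
          (\<lambda>t. (\<Sum>i\<in>{1..j}. int (e i) * \<beta> i t) + int (e (Suc j)) * \<beta> (Suc j) t)"
    using Suc by (intro hw_mult hw_power x_weight) auto
  then show ?case by (simp add: sum.cl_ivl_Suc)
qed

lemma wt_in_Qgen: "(\<lambda>t. \<Sum>i\<in>{1..j}. int (e i) * \<beta> i t) \<in> Qgen \<iota> n act x j"
  unfolding Qgen_def by (intro CollectI exI[of _ "\<lambda>i. int (e i)"]) simp

lemma Rsub_weight:
  assumes j: "j \<le> N" and a: "a \<in> Rsub \<iota> x j" "a \<noteq> 0" and hw: "has_weight \<iota> n act a \<gamma>"
  shows "\<gamma> \<in> Qgen \<iota> n act x j"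
proof -
  obtain S c where S: "finite S" "S \<subseteq> expv j" "a = (\<Sum>e\<in>S. \<iota> (c e) * mono x j e)"
    using a(1) unfolding Rsub_def by blast
  define w where "w e = (\<lambda>t. \<Sum>i\<in>{1..j}. int (e i) * \<beta> i t)" for e :: "nat \<Rightarrow> nat"
  have mw: "has_weight \<iota> n act (\<iota> (c e) * mono x j e) (w e)" for e
    unfolding w_def using mono_weight[OF j] hw_scale by blast
  define W where "W = insert \<gamma> (w ` S)"
  have fW: "finite W" unfolding W_def using S(1) by simp
  have WL: "W \<subseteq> lattice n" unfolding W_def using hw_lattice[OF hw] hw_lattice[OF mw] by blast
  define F where "F \<alpha> = (\<Sum>e\<in>{e. e \<in> S \<and> w e = \<alpha>}. \<iota> (c e) * mono x j e) - (if \<alpha> = \<gamma> then a else 0)" for \<alpha>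
  have Fw: "\<forall>\<alpha>\<in>W. has_weight \<iota> n act (F \<alpha>) \<alpha>"
  proof
    fix \<alpha> assume aW: "\<alpha> \<in> W"
    have l: "\<alpha> \<in> lattice n" using aW WL by blast
    have "has_weight \<iota> n act (\<Sum>e\<in>{e. e \<in> S \<and> w e = \<alpha>}. \<iota> (c e) * mono x j e) \<alpha>"
      using mw by (intro hw_sum[OF l]) auto
    moreover have "has_weight \<iota> n act (if \<alpha> = \<gamma> then a else 0) \<alpha>"
      using hw hw_zero[OF l] by auto
    ultimately show "has_weight \<iota> n act (F \<alpha>) \<alpha>" unfolding F_def by (rule hw_diff)
  qed
  have "sum F W = (\<Sum>\<alpha>\<in>W. \<Sum>e\<in>{e. e \<in> S \<and> w e = \<alpha>}. \<iota> (c e) * mono x j e) - (\<Sum>\<alpha>\<in>W. if \<alpha> = \<gamma> then a else 0)"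
    unfolding F_def by (simp add: sum_subtractf)
  also have "(\<Sum>\<alpha>\<in>W. \<Sum>e\<in>{e. e \<in> S \<and> w e = \<alpha>}. \<iota> (c e) * mono x j e) = a"
    unfolding S(3) by (rule sum.group[OF S(1) fW]) (auto simp: W_def)
  also have "(\<Sum>\<alpha>\<in>W. if \<alpha> = \<gamma> then a else 0) = a"
    using fW by (simp add: W_def)
  finally have "sum F W = 0" by simp
  then have "F \<gamma> = 0" using indep[OF fW WL Fw] by (simp add: W_def)
  show ?thesis
  proof (cases "\<gamma> \<in> w ` S")
    case True
    then show ?thesis using wt_in_Qgen unfolding w_def by auto
  next
    case False
    then have e0: "{e. e \<in> S \<and> w e = \<gamma>} = {}" by auto
    have "F \<gamma> = - a" unfolding F_def e0 by simp
    then show ?thesis using \<open>F \<gamma> = 0\<close> a(2) by simp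
  qed
qed

end


context qna
begin

lemma QK:
  assumes k: "k \<in> {1..N}"
  shows "is_sigma_der \<iota> (Rsub \<iota> x (k - 1)) (\<sigma> k) (\<delta> k)"
    "\<forall>a\<in>Rsub \<iota> x (k - 1). x k * a = \<sigma> k a * x k + \<delta> k a"
    "\<exists>h\<in>torus n. (\<forall>a\<in>Rsub \<iota> x (k - 1). act h a = \<sigma> k a)"
  using Q k unfolding QNA_def by blast+

lemma Rsub_0: "0 \<in> Rsub \<iota> x j"
  unfolding Rsub_def by (rule CollectI, rule exI[of _ "{}"]) simp

lemma Rsub_term: "e \<in> expv j \<Longrightarrow> \<iota> c * mono x j e \<in> Rsub \<iota> x j"
  unfolding Rsub_def by (rule CollectI, rule exI[of _ "{e}"], rule exI[of _ "\<lambda>_. c"]) simp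

lemma Rsub_mono: "e \<in> expv j \<Longrightarrow> mono x j e \<in> Rsub \<iota> x j"
  using Rsub_term[of e j 1] Kalg_facts(5)[OF K] by simp

lemma Rsub_sum: "finite S \<Longrightarrow> S \<subseteq> expv j \<Longrightarrow> (\<Sum>e\<in>S. \<iota> (c e) * mono x j e) \<in> Rsub \<iota> x j"
  unfolding Rsub_def by blast

lemma part_a:
  assumes k: "k \<in> {1..N}" and dk: "\<exists>a\<in>Rsub \<iota> x (k - 1). \<delta> k a \<noteq> 0"
  shows "\<exists>d. \<beta> k = (\<lambda>t. \<Sum>i\<in>{1..k-1}. d i * \<beta> i t)"
proof -
  let ?R = "Rsub \<iota> x (k - 1)"
  have D1: "\<forall>a\<in>?R. \<delta> k a \<in> ?R" and D2: "\<forall>a\<in>?R. \<forall>b\<in>?R. \<delta> k (a + b) = \<delta> k a + \<delta> k b"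
    and D3: "\<forall>c. \<forall>a\<in>?R. \<delta> k (\<iota> c * a) = \<iota> c * \<delta> k a"
    using QK(1)[OF k] unfolding is_sigma_der_def by blast+
  have d0: "\<delta> k 0 = 0" using D2 Rsub_0[of "k - 1"] by (metis add.right_neutral add_left_imp_eq)
  obtain e where e: "e \<in> expv (k - 1)" and de: "\<delta> k (mono x (k - 1) e) \<noteq> 0"
  proof (rule ccontr)
    assume "\<not> thesis"
    then have allz: "\<forall>e\<in>expv (k - 1). \<delta> k (mono x (k - 1) e) = 0" using that by blast
    have "finite S' \<Longrightarrow> S' \<subseteq> expv (k - 1) \<Longrightarrow> \<delta> k (\<Sum>e\<in>S'. \<iota> (c e) * mono x (k - 1) e) = 0" for S' c
    proof (induction S' rule: finite_induct)
      case empty then show ?case using d0 by simp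
    next
      case (insert e S')
      have "\<delta> k (\<Sum>e\<in>insert e S'. \<iota> (c e) * mono x (k - 1) e)
          = \<delta> k (\<iota> (c e) * mono x (k - 1) e + (\<Sum>e\<in>S'. \<iota> (c e) * mono x (k - 1) e))"
        using insert by simp
      also have "\<dots> = \<delta> k (\<iota> (c e) * mono x (k - 1) e) + \<delta> k (\<Sum>e\<in>S'. \<iota> (c e) * mono x (k - 1) e)"
        using D2 Rsub_term Rsub_sum insert by simp
      also have "\<dots> = 0"
        using insert D3 Rsub_mono allz by simp
      finally show ?case .
    qed
    then have "\<forall>a\<in>?R. \<delta> k a = 0" unfolding Rsub_def by blast
    then show False using dk by blast
  qed
  let ?m = "mono x (k - 1) e"
  define \<mu> where "\<mu> = (\<lambda>t. \<Sum>i\<in>{1..k-1}. int (e i) * \<beta> i t)"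
  have kN: "k - 1 \<le> N" using k by (metis atLeastAtMost_iff diff_le_self le_trans)
  have mw: "has_weight \<iota> n act ?m \<mu>" unfolding \<mu>_def using mono_weight[OF kN] .
  have xw: "has_weight \<iota> n act (x k) (\<beta> k)" using x_weight k by blast
  have mR: "?m \<in> ?R" using Rsub_mono e by blast
  obtain h where h: "h \<in> torus n" and hs: "\<forall>a\<in>?R. act h a = \<sigma> k a" using QK(3)[OF k] by blast
  have sm: "\<sigma> k ?m = \<iota> (chi n \<mu> h) * ?m" using hs mR hw_act[OF mw h] by simp
  have dm: "\<delta> k ?m = x k * ?m - \<iota> (chi n \<mu> h) * (?m * x k)"
    using QK(2)[OF k] mR sm by (simp add: mult.assoc eq_diff_eq)
  define \<gamma> where "\<gamma> = (\<lambda>t. \<beta> k t + \<mu> t)"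
  have w1: "has_weight \<iota> n act (x k * ?m) \<gamma>" unfolding \<gamma>_def by (rule hw_mult[OF xw mw])
  have "has_weight \<iota> n act (?m * x k) (\<lambda>t. \<mu> t + \<beta> k t)" by (rule hw_mult[OF mw xw])
  moreover have "(\<lambda>t. \<mu> t + \<beta> k t) = \<gamma>" unfolding \<gamma>_def by (simp add: add.commute)
  ultimately have w2: "has_weight \<iota> n act (\<iota> (chi n \<mu> h) * (?m * x k)) \<gamma>" using hw_scale by simp
  have dw: "has_weight \<iota> n act (\<delta> k ?m) \<gamma>" unfolding dm by (rule hw_diff[OF w1 w2])
  have "\<gamma> \<in> Qgen \<iota> n act x (k - 1)"
    using Rsub_weight[OF kN _ de dw] D1 mR by blast
  then obtain c where c: "\<gamma> = (\<lambda>t. \<Sum>i\<in>{1..k-1}. c i * \<beta> i t)" unfolding Qgen_def by blast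
  have "\<beta> k = (\<lambda>t. \<Sum>i\<in>{1..k-1}. (c i - int (e i)) * \<beta> i t)"
  proof
    fix t
    have "\<beta> k t = \<gamma> t - \<mu> t" unfolding \<gamma>_def by simp
    also have "\<dots> = (\<Sum>i\<in>{1..k-1}. (c i - int (e i)) * \<beta> i t)"
      unfolding c \<mu>_def by (simp add: sum_subtractf left_diff_distrib)
    finally show "\<beta> k t = (\<Sum>i\<in>{1..k-1}. (c i - int (e i)) * \<beta> i t)" .
  qed
  then show ?thesis by (rule exI[of _ "\<lambda>i. c i - int (e i)"])
qed

lemma Qgen_a:
  assumes k: "k \<ge> 1" and d: "\<beta> k = (\<lambda>t. \<Sum>i\<in>{1..k-1}. d i * \<beta> i t)"
  shows "Qgen \<iota> n act x k = Qgen \<iota> n act x (k - 1)"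
proof
  show "Qgen \<iota> n act x k \<subseteq> Qgen \<iota> n act x (k - 1)"
  proof
    fix q assume "q \<in> Qgen \<iota> n act x k"
    then obtain c where c: "q = (\<lambda>t. \<Sum>i\<in>{1..k}. c i * \<beta> i t)" unfolding Qgen_def by blast
    have "q = (\<lambda>t. \<Sum>i\<in>{1..k-1}. (c i + c k * d i) * \<beta> i t)"
    proof
      fix t
      have "q t = (\<Sum>i\<in>{1..k-1}. c i * \<beta> i t) + c k * \<beta> k t" unfolding c using sum_last[OF k] by simp
      also have "\<dots> = (\<Sum>i\<in>{1..k-1}. (c i + c k * d i) * \<beta> i t)"
        by (subst d) (simp add: sum_distrib_left sum.distrib distrib_right mult.assoc)
      finally show "q t = (\<Sum>i\<in>{1..k-1}. (c i + c k * d i) * \<beta> i t)" .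
    qed
    then show "q \<in> Qgen \<iota> n act x (k - 1)" unfolding Qgen_def mem_Collect_eq by (rule exI[of _ "\<lambda>i. c i + c k * d i"])
  qed
next
  show "Qgen \<iota> n act x (k - 1) \<subseteq> Qgen \<iota> n act x k"
  proof
    fix q assume "q \<in> Qgen \<iota> n act x (k - 1)"
    then obtain c where c: "q = (\<lambda>t. \<Sum>i\<in>{1..k-1}. c i * \<beta> i t)" unfolding Qgen_def by blast
    have "q = (\<lambda>t. \<Sum>i\<in>{1..k}. (c(k := 0)) i * \<beta> i t)"
    proof
      fix t
      have "(\<Sum>i\<in>{1..k}. (c(k := 0)) i * \<beta> i t) = (\<Sum>i\<in>{1..k-1}. (c(k := 0)) i * \<beta> i t)"
        using sum_last[OF k, of "\<lambda>i. (c(k := 0)) i * \<beta> i t"] by simp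
      also have "\<dots> = q t" unfolding c by (rule sum.cong) auto
      finally show "q t = (\<Sum>i\<in>{1..k}. (c(k := 0)) i * \<beta> i t)" by simp
    qed
    then show "q \<in> Qgen \<iota> n act x k" unfolding Qgen_def mem_Collect_eq by (rule exI[of _ "c(k := 0)"])
  qed
qed

lemma Qgen_b:
  assumes k: "k \<ge> 1"
  shows "Qgen \<iota> n act x k = {(\<lambda>t. q t + m * \<beta> k t) | q m. q \<in> Qgen \<iota> n act x (k - 1)}"
proof
  show "Qgen \<iota> n act x k \<subseteq> {(\<lambda>t. q t + m * \<beta> k t) | q m. q \<in> Qgen \<iota> n act x (k - 1)}"
  proof
    fix q assume "q \<in> Qgen \<iota> n act x k"
    then obtain c where c: "q = (\<lambda>t. \<Sum>i\<in>{1..k}. c i * \<beta> i t)" unfolding Qgen_def by blast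
    have "q = (\<lambda>t. (\<Sum>i\<in>{1..k-1}. c i * \<beta> i t) + c k * \<beta> k t)"
      unfolding c by (rule ext) (rule sum_last[OF k])
    moreover have "(\<lambda>t. \<Sum>i\<in>{1..k-1}. c i * \<beta> i t) \<in> Qgen \<iota> n act x (k - 1)" unfolding Qgen_def mem_Collect_eq by (rule exI[of _ c]) (rule refl)
    ultimately show "q \<in> {(\<lambda>t. q t + m * \<beta> k t) | q m. q \<in> Qgen \<iota> n act x (k - 1)}"
      by (auto intro!: exI[of _ "\<lambda>t. \<Sum>i\<in>{1..k-1}. c i * \<beta> i t"] exI[of _ "c k"])
  qed
next
  show "{(\<lambda>t. q t + m * \<beta> k t) | q m. q \<in> Qgen \<iota> n act x (k - 1)} \<subseteq> Qgen \<iota> n act x k"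
  proof
    fix p assume "p \<in> {(\<lambda>t. q t + m * \<beta> k t) | q m. q \<in> Qgen \<iota> n act x (k - 1)}"
    then obtain q m where p: "p = (\<lambda>t. q t + m * \<beta> k t)" and q: "q \<in> Qgen \<iota> n act x (k - 1)" by blast
    obtain c where c: "q = (\<lambda>t. \<Sum>i\<in>{1..k-1}. c i * \<beta> i t)" using q unfolding Qgen_def by blast
    have "p = (\<lambda>t. \<Sum>i\<in>{1..k}. (c(k := m)) i * \<beta> i t)"
    proof
      fix t
      have "(\<Sum>i\<in>{1..k}. (c(k := m)) i * \<beta> i t) = (\<Sum>i\<in>{1..k-1}. (c(k := m)) i * \<beta> i t) + m * \<beta> k t"
        using sum_last[OF k, of "\<lambda>i. (c(k := m)) i * \<beta> i t"] by simp
      also have "(\<Sum>i\<in>{1..k-1}. (c(k := m)) i * \<beta> i t) = q t" unfolding c by (rule sum.cong) auto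
      finally show "p t = (\<Sum>i\<in>{1..k}. (c(k := m)) i * \<beta> i t)" unfolding p by simp
    qed
    then show "p \<in> Qgen \<iota> n act x k" unfolding Qgen_def mem_Collect_eq by (rule exI[of _ "c(k := m)"])
  qed
qed

lemma act_power: "h \<in> torus n \<Longrightarrow> act h (a ^ m) = act h a ^ m"
  by (induction m) (auto simp: act_1 act_mult)

lemma faithful:
  assumes v: "\<forall>i\<in>{1..N}. (\<Sum>j<n. v j * \<beta> i j) = 0"
  shows "\<forall>j<n. v j = 0"
proof -
  define h :: "nat \<Rightarrow> 'k" where "h j = (if j < n then 2 powi v j else 1)" for j
  have h: "h \<in> torus n" unfolding torus_def h_def by auto
  have xfix: "act h (x i) = x i" if i: "i \<in> {1..N}" for i
  proof -
    have "chi n (\<beta> i) h = (\<Prod>j<n. (2::'k) powi (v j * \<beta> i j))"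
      unfolding chi_def h_def by (rule prod.cong) (auto simp: power_int_mult)
    also have "\<dots> = 2 powi (\<Sum>j<n. v j * \<beta> i j)" by (rule two_powi_sum) simp
    also have "\<dots> = 1" using v i by simp
    finally show ?thesis using hw_act[OF x_weight[OF i] h] Kalg_facts(5)[OF K] by simp
  qed
  have mfix: "j \<le> N \<Longrightarrow> act h (mono x j e) = mono x j e" for j e
    by (induction j) (auto simp: act_1[OF h] act_mult[OF h] act_power[OF h] xfix)
  have "act h r = r" for r
  proof -
    have "r \<in> Rsub \<iota> x N" using Q unfolding QNA_def PBW_basis_def by blast
    then obtain S c where "r = (\<Sum>e\<in>S. \<iota> (c e) * mono x N e)" unfolding Rsub_def by blast
    then show ?thesis by (simp add: act_sum[OF h] act_scale[OF h] mfix)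
  qed
  then have "act h = id" by auto
  then have h1: "h = (\<lambda>i. 1)" using Q h unfolding QNA_def by blast
  show ?thesis
  proof (intro allI impI)
    fix j assume j: "j < n"
    have "(2::'k) powi v j = 1" using fun_cong[OF h1, of j] j unfolding h_def by simp
    then show "v j = 0" by (rule two_powi_eq_1)
  qed
qed

end

theorem lemma5p5:
  fixes \<iota> :: "'k::field_char_0 \<Rightarrow> 'r::ring_1"
    and x :: "nat \<Rightarrow> 'r" and N :: nat and \<sigma> \<delta> :: "nat \<Rightarrow> 'r \<Rightarrow> 'r"
    and n :: nat and act :: "(nat \<Rightarrow> 'k) \<Rightarrow> 'r \<Rightarrow> 'r" and k :: nat
  assumes "QNA \<iota> x N \<sigma> \<delta> n act"
    and "k \<in> {1..N}"
  shows "((\<exists>a\<in>Rsub \<iota> x (k - 1). \<delta> k a \<noteq> 0) \<longrightarrow> Qgen \<iota> n act x k = Qgen \<iota> n act x (k - 1))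
       \<and> ((\<forall>a\<in>Rsub \<iota> x (k - 1). \<delta> k a = 0) \<longrightarrow>
            Qgen \<iota> n act x k = {(\<lambda>t. q t + m * wt \<iota> n act (x k) t) | q m. q \<in> Qgen \<iota> n act x (k - 1)}
          \<and> (\<forall>q\<in>Qgen \<iota> n act x (k - 1). \<forall>m::int. q = (\<lambda>t. m * wt \<iota> n act (x k) t) \<longrightarrow> m = 0))"
proof -
  interpret qna \<iota> x N \<sigma> \<delta> n act by unfold_locales (rule assms(1))
  have k1: "k \<ge> 1" using assms(2) by simp
  show ?thesis
  proof (intro conjI impI)
    assume "\<exists>a\<in>Rsub \<iota> x (k - 1). \<delta> k a \<noteq> 0"
    then obtain d where "\<beta> k = (\<lambda>t. \<Sum>i\<in>{1..k-1}. d i * \<beta> i t)" using part_a[OF assms(2)] by blast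
    then show "Qgen \<iota> n act x k = Qgen \<iota> n act x (k - 1)" by (rule Qgen_a[OF k1])
  next
    show "Qgen \<iota> n act x k = {(\<lambda>t. q t + m * wt \<iota> n act (x k) t) | q m. q \<in> Qgen \<iota> n act x (k - 1)}"
      by (rule Qgen_b[OF k1])
  next
    assume z: "\<forall>a\<in>Rsub \<iota> x (k - 1). \<delta> k a = 0"
    show "\<forall>q\<in>Qgen \<iota> n act x (k - 1). \<forall>m::int. q = (\<lambda>t. m * wt \<iota> n act (x k) t) \<longrightarrow> m = 0"
    proof (intro ballI allI impI)
      fix q and m :: int
      assume q: "q \<in> Qgen \<iota> n act x (k - 1)" and qm: "q = (\<lambda>t. m * wt \<iota> n act (x k) t)"
      show "m = 0"
      proof (rule ccontr)
        assume m0: "m \<noteq> 0"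
        obtain c where c: "q = (\<lambda>t. \<Sum>i\<in>{1..k-1}. c i * \<beta> i t)" using q unfolding Qgen_def by blast
        define Z where "Z = {k\<in>{1..N}. \<forall>a\<in>Rsub \<iota> x (k - 1). \<delta> k a = 0}"
        have cardZ: "n = card Z" using assms(1) unfolding QNA_def Z_def by blast
        have kZ: "k \<in> Z" using assms(2) z unfolding Z_def by simp
        have fZ: "finite Z" unfolding Z_def by simp
        have "card Z > 0" using kZ fZ card_gt_0_iff by blast
        then have cT: "card (Z - {k}) < n" using cardZ kZ fZ by (simp add: card_Diff_singleton)
        obtain v where v1: "\<exists>j<n. v j \<noteq> 0" and v2: "\<forall>i\<in>Z - {k}. (\<Sum>j<n. v j * \<beta> i j) = 0"
          using gauss[of "Z - {k}" n "\<lambda>i. \<beta> i"] fZ cT by blast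
        have all: "i \<in> {1..N} \<Longrightarrow> (\<Sum>j<n. v j * \<beta> i j) = 0" for i
        proof (induction i rule: less_induct)
          case (less i)
          show ?case
          proof (cases "i \<in> Z - {k}")
            case True then show ?thesis using v2 by blast
          next
            case notT: False
            show ?thesis
            proof (cases "i = k")
              case True
              have "m * (\<Sum>j<n. v j * \<beta> k j) = (\<Sum>j<n. v j * q j)"
                by (simp add: qm sum_distrib_left mult.left_commute)
              also have "\<dots> = (\<Sum>l\<in>{1..k-1}. c l * (\<Sum>j<n. v j * \<beta> l j))"
                unfolding c by (rule dot_lin)
              also have "\<dots> = 0"
              proof (rule sum.neutral, rule ballI)
                fix l assume l: "l \<in> {1..k-1}"
                have "l < i" "l \<in> {1..N}" using l True assms(2) by auto
                then show "c l * (\<Sum>j<n. v j * \<beta> l j) = 0" using less.IH by simp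
              qed
              finally show ?thesis using m0 True by simp
            next
              case False
              then have "i \<notin> Z" using notT by blast
              then have "\<exists>a\<in>Rsub \<iota> x (i - 1). \<delta> i a \<noteq> 0" using less.prems unfolding Z_def by auto
              then obtain d where d: "\<beta> i = (\<lambda>t. \<Sum>l\<in>{1..i-1}. d l * \<beta> l t)"
                using part_a less.prems by blast
              have "(\<Sum>j<n. v j * \<beta> i j) = (\<Sum>l\<in>{1..i-1}. d l * (\<Sum>j<n. v j * \<beta> l j))"
                by (subst d) (rule dot_lin)
              also have "\<dots> = 0"
              proof (rule sum.neutral, rule ballI)
                fix l assume l: "l \<in> {1..i-1}"
                have "l < i" "l \<in> {1..N}" using l less.prems by auto
                then show "d l * (\<Sum>j<n. v j * \<beta> l j) = 0" using less.IH by simp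
              qed
              finally show ?thesis .
            qed
          qed
        qed
        then have "\<forall>j<n. v j = 0" using faithful by blast
        with v1 show False by blast
      qed
    qed
  qed
qed

end
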